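(* If $q$ is an odd prime power and $\mathcal{S}$ is a $(q+2)$-element subset of $\mathbb{P}^2(\mathbb{F}_q)$, then there are at most two points $P\in\mathcal{S}$ with the property that no line through $P$ contains more than two points of $\mathcal{S}$. *)

theory Defs
  imports Main
begin

text \<open>Projective plane P^2(F) over a field F, with homogeneous coordinates as triples.\<close>

definition dot3 :: "'a::field \<times> 'a \<times> 'a \<Rightarrow> 'a \<times> 'a \<times> 'a \<Rightarrow> 'a" where
  "dot3 l v = (case l of (a, b, c) \<Rightarrow> case v of (x, y, z) \<Rightarrow> a * x + b * y + c * z)"

definition proj_pt :: "'a::field \<times> 'a \<times> 'a \<Rightarrow> ('a \<times> 'a \<times> 'a) set" where
  "proj_pt v = (case v of (x, y, z) \<Rightarrow> {(c * x, c * y, c * z) | c. c \<noteq> 0})"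

definition proj_points :: "('a::field \<times> 'a \<times> 'a) set set" where
  "proj_points = proj_pt ` {v. v \<noteq> (0, 0, 0)}"

definition proj_line :: "'a::field \<times> 'a \<times> 'a \<Rightarrow> ('a \<times> 'a \<times> 'a) set set" where
  "proj_line l = {P \<in> proj_points. \<forall>v\<in>P. dot3 l v = 0}"

definition proj_lines :: "('a::field \<times> 'a \<times> 'a) set set set" where
  "proj_lines = proj_line ` {l. l \<noteq> (0, 0, 0)}"

end

theory Submission
  imports Defs
begin


definition det3 :: "'a::field \<times> 'a \<times> 'a \<Rightarrow> 'a \<times> 'a \<times> 'a \<Rightarrow> 'a \<times> 'a \<times> 'a \<Rightarrow> 'a" where
  "det3 u v w = (case u of (u1,u2,u3) \<Rightarrow> case v of (v1,v2,v3) \<Rightarrow> case w of (w1,w2,w3) \<Rightarrow>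
     u1*(v2*w3 - v3*w2) - u2*(v1*w3 - v3*w1) + u3*(v1*w2 - v2*w1))"

definition cross3 :: "'a::field \<times> 'a \<times> 'a \<Rightarrow> 'a \<times> 'a \<times> 'a \<Rightarrow> 'a \<times> 'a \<times> 'a" where
  "cross3 u v = (case u of (u1,u2,u3) \<Rightarrow> case v of (v1,v2,v3) \<Rightarrow>
     (u2*v3 - u3*v2, u3*v1 - u1*v3, u1*v2 - u2*v1))"

lemma id1: "det3 a r c * det3 a b s - det3 a s c * det3 a b r = det3 a b c * det3 a r s"
proof -
  obtain a1 a2 a3 where a: "a = (a1,a2,a3)" by (cases a)
  obtain b1 b2 b3 where b: "b = (b1,b2,b3)" by (cases b)
  obtain c1 c2 c3 where c: "c = (c1,c2,c3)" by (cases c)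
  obtain r1 r2 r3 where r: "r = (r1,r2,r3)" by (cases r)
  obtain s1 s2 s3 where s: "s = (s1,s2,s3)" by (cases s)
  show ?thesis unfolding a b c r s det3_def by simp algebra
qed
lemma id2: "det3 a b r * det3 s b c - det3 a b s * det3 r b c = det3 a b c * det3 r s b"
proof -
  obtain a1 a2 a3 where a: "a = (a1,a2,a3)" by (cases a)
  obtain b1 b2 b3 where b: "b = (b1,b2,b3)" by (cases b)
  obtain c1 c2 c3 where c: "c = (c1,c2,c3)" by (cases c)
  obtain r1 r2 r3 where r: "r = (r1,r2,r3)" by (cases r)
  obtain s1 s2 s3 where s: "s = (s1,s2,s3)" by (cases s)
  show ?thesis unfolding a b c r s det3_def by simp algebra
qed
lemma id3: "det3 r b c * det3 a s c - det3 s b c * det3 a r c = det3 a b c * det3 r s c"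
proof -
  obtain a1 a2 a3 where a: "a = (a1,a2,a3)" by (cases a)
  obtain b1 b2 b3 where b: "b = (b1,b2,b3)" by (cases b)
  obtain c1 c2 c3 where c: "c = (c1,c2,c3)" by (cases c)
  obtain r1 r2 r3 where r: "r = (r1,r2,r3)" by (cases r)
  obtain s1 s2 s3 where s: "s = (s1,s2,s3)" by (cases s)
  show ?thesis unfolding a b c r s det3_def by simp algebra
qed

lemma pt_on_line:
  fixes x l :: "'a::field \<times> 'a \<times> 'a"
  assumes "x \<noteq> (0,0,0)" "dot3 l x = 0"
  shows "proj_pt x \<in> proj_line l"
proof -
  have "proj_pt x \<in> proj_points" using assms(1) by (simp add: proj_points_def)
  moreover have "\<forall>w\<in>proj_pt x. dot3 l w = 0"
  proof
    fix w assume "w \<in> proj_pt x"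
    then obtain c x1 x2 x3 where x: "x = (x1,x2,x3)" and w: "w = (c*x1,c*x2,c*x3)"
      by (cases x) (auto simp: proj_pt_def)
    obtain l1 l2 l3 where l: "l = (l1,l2,l3)" by (cases l)
    have "dot3 l w = c * dot3 l x" by (simp add: x w l dot3_def algebra_simps)
    then show "dot3 l w = 0" using assms(2) by simp
  qed
  ultimately show ?thesis by (simp add: proj_line_def)
qed

lemma line_through:
  fixes u v w :: "'a::field \<times> 'a \<times> 'a"
  assumes "u \<noteq> (0,0,0)" "v \<noteq> (0,0,0)" "w \<noteq> (0,0,0)" "det3 u v w = 0"
  shows "\<exists>L\<in>proj_lines. proj_pt u \<in> L \<and> proj_pt v \<in> L \<and> proj_pt w \<in> L"
proof -
  have "\<exists>l. l \<noteq> (0,0,0) \<and> dot3 l u = 0 \<and> dot3 l v = 0 \<and> dot3 l w = 0"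
  proof -
    obtain u1 u2 u3 where u: "u = (u1,u2,u3)" by (cases u)
    obtain v1 v2 v3 where v: "v = (v1,v2,v3)" by (cases v)
    obtain w1 w2 w3 where w: "w = (w1,w2,w3)" by (cases w)
    have d: "u1*(v2*w3 - v3*w2) - u2*(v1*w3 - v3*w1) + u3*(v1*w2 - v2*w1) = 0"
      using assms(4) by (simp add: det3_def u v w)
    show ?thesis
    proof (cases "cross3 u v = (0,0,0)")
      case False
      moreover have "dot3 (cross3 u v) u = 0" by (simp add: cross3_def dot3_def u v w; algebra)
      moreover have "dot3 (cross3 u v) v = 0" by (simp add: cross3_def dot3_def u v w; algebra)
      moreover have "dot3 (cross3 u v) w = 0" using d by (simp add: cross3_def dot3_def u v w; algebra)
      ultimately show ?thesis by blast
    next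
      case cuv: True
      show ?thesis
      proof (cases "cross3 u w = (0,0,0)")
        case False
        moreover have "dot3 (cross3 u w) u = 0" by (simp add: cross3_def dot3_def u v w; algebra)
        moreover have "dot3 (cross3 u w) w = 0" by (simp add: cross3_def dot3_def u v w; algebra)
        moreover have "dot3 (cross3 u w) v = 0" using d by (simp add: cross3_def dot3_def u v w; algebra)
        ultimately show ?thesis by blast
      next
        case cuw: True
        from cuv cuw have e: "u2*v3 = u3*v2" "u3*v1 = u1*v3" "u1*v2 = u2*v1"
             "u2*w3 = u3*w2" "u3*w1 = u1*w3" "u1*w2 = u2*w1"
          by (simp_all add: cross3_def u v w)
        consider "u1 \<noteq> 0" | "u2 \<noteq> 0" | "u3 \<noteq> 0" using assms(1) by (auto simp: u)
        then show ?thesis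
        proof cases
          case 1 then show ?thesis using e
            by (intro exI[of _ "(u2, -u1, 0)"]) (simp add: dot3_def u v w; algebra)
        next
          case 2 then show ?thesis using e
            by (intro exI[of _ "(u2, -u1, 0)"]) (simp add: dot3_def u v w; algebra)
        next
          case 3 then show ?thesis using e
            by (intro exI[of _ "(0, u3, -u2)"]) (simp add: dot3_def u v w; algebra)
        qed
      qed
    qed
  qed
  then obtain l where "l \<noteq> (0,0,0)" "dot3 l u = 0" "dot3 l v = 0" "dot3 l w = 0" by blast
  then show ?thesis using assms
    by (intro bexI[of _ "proj_line l"]) (auto simp: proj_lines_def pt_on_line)
qed



lemma pair_prod:
  fixes h :: "'b \<Rightarrow> 'c::comm_monoid_mult"
  assumes "finite A" "\<forall>x\<in>A. g x \<in> A \<and> g x \<noteq> x \<and> g (g x) = x \<and> h x * h (g x) = 1"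
  shows "prod h A = 1"
  using assms
proof (induction "card A" arbitrary: A rule: less_induct)
  case less
  show ?case
  proof (cases "A = {}")
    case True then show ?thesis by simp
  next
    case False
    then obtain x where x: "x \<in> A" by blast
    let ?B = "A - {x, g x}"
    have gx: "g x \<in> A" "g x \<noteq> x" "h x * h (g x) = 1" using less.prems x by auto
    have B: "\<forall>y\<in>?B. g y \<in> ?B \<and> g y \<noteq> y \<and> g (g y) = y \<and> h y * h (g y) = 1"
    proof
      fix y assume y: "y \<in> ?B"
      have P: "g y \<in> A \<and> g y \<noteq> y \<and> g (g y) = y \<and> h y * h (g y) = 1" using less.prems y by auto
      have "g y \<noteq> x" using y P by auto
      moreover have "g y \<noteq> g x"
      proof
        assume "g y = g x"
        then have "g (g y) = g (g x)" by simp
        moreover have "g (g x) = x" using less.prems x by auto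
        ultimately have "y = x" using P by simp
        then show False using y by simp
      qed
      ultimately show "g y \<in> ?B \<and> g y \<noteq> y \<and> g (g y) = y \<and> h y * h (g y) = 1" using P by auto
    qed
    have "card ?B < card A" using x less.prems(1) by (intro psubset_card_mono) auto
    then have pB: "prod h ?B = 1" using less.hyps less.prems(1) B by auto
    have eqA: "A = insert x (insert (g x) ?B)" using x gx by auto
    have "prod h (insert x (insert (g x) ?B)) = h x * (h (g x) * prod h ?B)"
      using less.prems(1) gx(2) by simp
    moreover have "prod h A = prod h (insert x (insert (g x) ?B))" using eqA by (rule arg_cong)
    ultimately have "prod h A = h x * (h (g x) * prod h ?B)" by simp
    then show ?thesis using pB gx by (simp add: mult.assoc[symmetric])
  qed
qed

lemma pair_even:
  assumes "finite A" "\<forall>x\<in>A. g x \<in> A \<and> g x \<noteq> x \<and> g (g x) = x"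
  shows "even (card A)"
proof -
  have "prod (\<lambda>_. -1::int) A = 1" using pair_prod[of A g "\<lambda>_. -1::int"] assms by auto
  then have "(-1::int) ^ card A = 1" by simp
  then show ?thesis using neg_one_odd_power[of "card A", where 'a=int] by force
qed

lemma char_ne2:
  assumes "odd (card (UNIV :: 'a::{field,finite} set))"
  shows "(1::'a) \<noteq> -1"
proof
  assume h: "(1::'a) = -1"
  have "even (card (UNIV :: 'a set))"
    apply (rule pair_even[of _ "\<lambda>x. x + 1"])
    using h by (auto simp: algebra_simps eq_neg_iff_add_eq_0)
  then show False using assms by simp
qed

lemma wilson:
  assumes "(1::'a::{field,finite}) \<noteq> -1"
  shows "prod (\<lambda>x. x) {x::'a. x \<noteq> 0} = -1"
proof -
  let ?A = "{x::'a. x \<noteq> 0 \<and> x \<noteq> 1 \<and> x \<noteq> -1}"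
  have sq: "x = 1 \<or> x = -1" if "x * x = 1" for x :: 'a
  proof -
    have "(x - 1) * (x + 1) = 0" using that by (simp add: algebra_simps)
    then show ?thesis by (auto simp: eq_neg_iff_add_eq_0)
  qed
  have "prod (\<lambda>x. x) ?A = 1"
  proof (rule pair_prod[of _ inverse])
    show "\<forall>x\<in>?A. inverse x \<in> ?A \<and> inverse x \<noteq> x \<and> inverse (inverse x) = x \<and> x * inverse x = 1"
    proof
      fix x assume x: "x \<in> ?A"
      have "inverse x \<noteq> x"
      proof
        assume "inverse x = x"
        moreover have "x * inverse x = 1" using x by simp
        ultimately have "x * x = 1" by simp
        then show False using sq x by auto
      qed
      moreover have "inverse x \<noteq> 1" "inverse x \<noteq> -1" using x
        by (auto simp: inverse_eq_iff_eq) (metis inverse_minus_eq inverse_1 inverse_inverse_eq)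
      ultimately show "inverse x \<in> ?A \<and> inverse x \<noteq> x \<and> inverse (inverse x) = x \<and> x * inverse x = 1"
        using x by auto
    qed
  qed simp
  moreover have "{x::'a. x \<noteq> 0} = insert 1 (insert (-1) ?A)" by auto
  ultimately show ?thesis using assms by simp
qed

definition rep :: "('a::field \<times> 'a \<times> 'a) set \<Rightarrow> 'a \<times> 'a \<times> 'a" where
  "rep P = (SOME v. v \<noteq> (0,0,0) \<and> P = proj_pt v)"

lemma rep: "P \<in> proj_points \<Longrightarrow> rep P \<noteq> (0,0,0) \<and> P = proj_pt (rep P)"
  unfolding rep_def proj_points_def by (rule someI_ex) auto

lemma collinear_bad:
  fixes S :: "('a::{field, finite} \<times> 'a \<times> 'a) set set"
  assumes good: "\<forall>L\<in>proj_lines. P \<in> L \<longrightarrow> card (L \<inter> S) \<le> 2"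
    and P: "P \<in> {X,Y,Z}" and S: "X \<in> S" "Y \<in> S" "Z \<in> S"
    and d: "X \<noteq> Y" "X \<noteq> Z" "Y \<noteq> Z"
    and nz: "x \<noteq> (0,0,0)" "y \<noteq> (0,0,0)" "z \<noteq> (0,0,0)"
    and e: "X = proj_pt x" "Y = proj_pt y" "Z = proj_pt z"
    and det: "det3 x y z = 0"
  shows False
proof -
  obtain L where L: "L \<in> proj_lines" "X \<in> L" "Y \<in> L" "Z \<in> L"
    using line_through[OF nz det] e by blast
  have "{X,Y,Z} \<subseteq> L \<inter> S" using L S by auto
  then have "card {X,Y,Z} \<le> card (L \<inter> S)" by (intro card_mono) auto
  moreover have "card {X,Y,Z} = 3" using d by auto
  moreover have "P \<in> L" using P L by auto
  ultimately show False using good L(1) by fastforce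
qed

lemma bij_prod:
  fixes f :: "'b \<Rightarrow> 'a::{field,finite}"
  assumes "finite T" "card T = card (UNIV :: 'a set) - 1" "inj_on f T" "\<forall>R\<in>T. f R \<noteq> 0"
  shows "prod f T = prod (\<lambda>x. x) {x::'a. x \<noteq> 0}"
proof -
  have sub: "f ` T \<subseteq> {x::'a. x \<noteq> 0}" using assms(4) by auto
  have "card {x::'a. x \<noteq> 0} = card (UNIV - {0::'a})" by (simp add: Collect_neg_eq Compl_eq_Diff_UNIV)
  also have "\<dots> = card (UNIV :: 'a set) - 1" by (simp add: card_Diff_singleton)
  finally have "card (f ` T) = card {x::'a. x \<noteq> 0}" using assms(2,3) card_image by metis
  then have "f ` T = {x::'a. x \<noteq> 0}" using sub by (intro card_subset_eq) auto
  then have "prod f T = prod (\<lambda>x. x) (f ` T)" using prod.reindex[OF assms(3), of "\<lambda>x. x"] by simp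
  then show ?thesis using \<open>f ` T = _\<close> by simp
qed

theorem proposition1p3:
  fixes S :: "('a::{field, finite} \<times> 'a \<times> 'a) set set"
  assumes "odd (card (UNIV :: 'a set))"
    and "S \<subseteq> proj_points"
    and "card S = card (UNIV :: 'a set) + 2"
  shows "card {P \<in> S. \<forall>L\<in>proj_lines. P \<in> L \<longrightarrow> card (L \<inter> S) \<le> 2} \<le> 2"
proof (rule ccontr)
  let ?G = "{P \<in> S. \<forall>L\<in>proj_lines. P \<in> L \<longrightarrow> card (L \<inter> S) \<le> 2}"
  let ?q = "card (UNIV :: 'a set)"
  assume "\<not> card ?G \<le> 2"
  then have "3 \<le> card ?G" by simp
  then obtain U where U: "U \<subseteq> ?G" "card U = 3" by (meson obtain_subset_with_card_n)
  then obtain P1 P2 P3 where U3: "U = {P1,P2,P3}" "P1 \<noteq> P2" "P2 \<noteq> P3" "P1 \<noteq> P3"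
    using card_3_iff by metis
  have inS: "P1 \<in> S" "P2 \<in> S" "P3 \<in> S" using U U3 by auto
  have g1: "\<forall>L\<in>proj_lines. P1 \<in> L \<longrightarrow> card (L \<inter> S) \<le> 2" using U U3 by auto
  have g2: "\<forall>L\<in>proj_lines. P2 \<in> L \<longrightarrow> card (L \<inter> S) \<le> 2" using U U3 by auto
  have g3: "\<forall>L\<in>proj_lines. P3 \<in> L \<longrightarrow> card (L \<inter> S) \<le> 2" using U U3 by auto
  define a where "a = rep P1"
  define b where "b = rep P2"
  define c where "c = rep P3"
  have ra: "a \<noteq> (0,0,0)" "P1 = proj_pt a" using rep[of P1] inS assms(2) a_def by auto
  have rb: "b \<noteq> (0,0,0)" "P2 = proj_pt b" using rep[of P2] inS assms(2) b_def by auto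
  have rc: "c \<noteq> (0,0,0)" "P3 = proj_pt c" using rep[of P3] inS assms(2) c_def by auto
  have D: "det3 a b c \<noteq> 0"
  proof
    assume "det3 a b c = 0"
    then show False using collinear_bad[OF g1 _ inS, of a b c] U3 ra rb rc by auto
  qed
  define T where "T = S - {P1,P2,P3}"
  have finT: "finite T" by simp
  have cardT: "card T = ?q - 1"
    unfolding T_def using inS U3 assms(3) by (subst card_Diff_subset) auto
  have RT: "R \<in> S \<and> R \<noteq> P1 \<and> R \<noteq> P2 \<and> R \<noteq> P3 \<and> rep R \<noteq> (0,0,0) \<and> R = proj_pt (rep R)"
    if "R \<in> T" for R
    using that rep[of R] assms(2) unfolding T_def by auto
  have nz1: "det3 a b (rep R) \<noteq> 0" if "R \<in> T" for R
  proof
    assume "det3 a b (rep R) = 0"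
    then show False using collinear_bad[OF g1, of P1 P2 R a b "rep R"] RT[OF that] inS U3 ra rb by auto
  qed
  have nz2: "det3 a (rep R) c \<noteq> 0" if "R \<in> T" for R
  proof
    assume "det3 a (rep R) c = 0"
    then show False using collinear_bad[OF g1, of P1 R P3 a "rep R" c] RT[OF that] inS U3 ra rc by auto
  qed
  have nz3: "det3 (rep R) b c \<noteq> 0" if "R \<in> T" for R
  proof
    assume "det3 (rep R) b c = 0"
    then show False using collinear_bad[OF g2, of R P2 P3 "rep R" b c] RT[OF that] inS U3 rb rc by auto
  qed
  define f1 where "f1 R = det3 a (rep R) c / det3 a b (rep R)" for R
  define f2 where "f2 R = det3 a b (rep R) / det3 (rep R) b c" for R
  define f3 where "f3 R = det3 (rep R) b c / det3 a (rep R) c" for R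
  have inj1: "inj_on f1 T"
  proof (rule inj_onI, rule ccontr)
    fix R R' assume R: "R \<in> T" "R' \<in> T" "f1 R = f1 R'" "R \<noteq> R'"
    then have "det3 a (rep R) c * det3 a b (rep R') = det3 a (rep R') c * det3 a b (rep R)"
      using nz1 unfolding f1_def by (simp add: frac_eq_eq)
    then have "det3 a b c * det3 a (rep R) (rep R') = 0" using id1[of a "rep R" c b "rep R'"] by simp
    then have "det3 a (rep R) (rep R') = 0" using D by simp
    then show False using collinear_bad[OF g1, of P1 R R' a "rep R" "rep R'"] RT[OF R(1)] RT[OF R(2)] inS R(4) ra by auto
  qed
  have inj2: "inj_on f2 T"
  proof (rule inj_onI, rule ccontr)
    fix R R' assume R: "R \<in> T" "R' \<in> T" "f2 R = f2 R'" "R \<noteq> R'"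
    then have "det3 a b (rep R) * det3 (rep R') b c = det3 a b (rep R') * det3 (rep R) b c"
      using nz3 unfolding f2_def by (simp add: frac_eq_eq)
    then have "det3 a b c * det3 (rep R) (rep R') b = 0" using id2[of a b "rep R" "rep R'" c] by simp
    then have "det3 (rep R) (rep R') b = 0" using D by simp
    then show False using collinear_bad[OF g2, of R R' P2 "rep R" "rep R'" b] RT[OF R(1)] RT[OF R(2)] inS R(4) rb by auto
  qed
  have inj3: "inj_on f3 T"
  proof (rule inj_onI, rule ccontr)
    fix R R' assume R: "R \<in> T" "R' \<in> T" "f3 R = f3 R'" "R \<noteq> R'"
    then have "det3 (rep R) b c * det3 a (rep R') c = det3 (rep R') b c * det3 a (rep R) c"
      using nz2 unfolding f3_def by (simp add: frac_eq_eq)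
    then have "det3 a b c * det3 (rep R) (rep R') c = 0" using id3[of "rep R" b c a "rep R'"] by simp
    then have "det3 (rep R) (rep R') c = 0" using D by simp
    then show False using collinear_bad[OF g3, of R R' P3 "rep R" "rep R'" c] RT[OF R(1)] RT[OF R(2)] inS R(4) rc by auto
  qed
  have c2: "(1::'a) \<noteq> -1" using char_ne2 assms(1) by blast
  have W: "prod (\<lambda>x. x) {x::'a. x \<noteq> 0} = -1" using wilson[OF c2] .
  have p1: "prod f1 T = -1" using bij_prod[OF finT cardT inj1] nz1 nz2 W unfolding f1_def by auto
  have p2: "prod f2 T = -1" using bij_prod[OF finT cardT inj2] nz1 nz3 W unfolding f2_def by auto
  have p3: "prod f3 T = -1" using bij_prod[OF finT cardT inj3] nz2 nz3 W unfolding f3_def by auto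
  have "prod (\<lambda>R. f1 R * f2 R * f3 R) T = prod f1 T * prod f2 T * prod f3 T"
    by (simp add: prod.distrib)
  also have "\<dots> = -1" using p1 p2 p3 by simp
  finally have m: "prod (\<lambda>R. f1 R * f2 R * f3 R) T = -1" .
  have "prod (\<lambda>R. f1 R * f2 R * f3 R) T = prod (\<lambda>_. 1) T"
    using nz1 nz2 nz3 by (intro prod.cong) (auto simp: f1_def f2_def f3_def)
  then have "prod (\<lambda>R. f1 R * f2 R * f3 R) T = 1" by simp
  then show False using m c2 by simp
qed

end
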